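(* Let $m,n,k$ be positive integers. Let $X_1,X_2,\ldots,X_k$ be pairwise disjoint subsets of $[m]$ and let $Y_1,Y_2,\ldots,Y_k$ be subsets of $[n]$. Label all functions $f:[m]\to[n]$ arbitrarily as $f_1,f_2,\ldots,f_{n^m}$, and form the $k\times n^m$ matrix $B=(b_{ij})$ with $b_{ij}=1$ if $f_j(X_i)=Y_i$ and $b_{ij}=0$ otherwise. Then the number $N$ of columns of $B$ all of whose entries are $0$ is $$N=\sum_{I\subseteq [k]}(-1)^{|I|}B(I),\qquad\text{where}\qquad B(I)=n^{|[m]\setminus \bigcup_{i\in I}X_i|}\cdot \prod_{i\in I}|Y_i|!\,S(|X_i|,|Y_i|),$$ and the sum runs over all subsets $I$ of $[k]$.
   Context: $[n]=\{1,\ldots,n\}$; $|X|$ is the cardinality of $X$; $S(a,b)$ denotes the Stirling number of the second kind. *)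

theory Defs
  imports Main "HOL-Library.FuncSet" "HOL-Combinatorics.Stirling"
begin

definition funs :: "nat \<Rightarrow> nat \<Rightarrow> (nat \<Rightarrow> nat) set" where
  "funs m n = {1..m} \<rightarrow>\<^sub>E {1..n}"

end

theory Submission
  imports Defs
begin

lemma IE:
  assumes "finite K" "finite F"
  shows "int (card {x\<in>F. \<forall>i\<in>K. \<not> P i x}) =
     (\<Sum>I\<in>Pow K. (-1) ^ card I * int (card {x\<in>F. \<forall>i\<in>I. P i x}))"
  using assms
proof (induction K arbitrary: F rule: finite_induct)
  case empty
  then show ?case by simp
next
  case (insert a K)
  let ?G = "{x\<in>F. P a x}"
  have e: "{x\<in>F. \<forall>i\<in>insert a K. \<not> P i x} = {x\<in>F. \<forall>i\<in>K. \<not> P i x} - {x\<in>?G. \<forall>i\<in>K. \<not> P i x}"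
    by auto
  have sub: "{x\<in>?G. \<forall>i\<in>K. \<not> P i x} \<subseteq> {x\<in>F. \<forall>i\<in>K. \<not> P i x}" by auto
  have "int (card {x\<in>F. \<forall>i\<in>insert a K. \<not> P i x}) =
     int (card {x\<in>F. \<forall>i\<in>K. \<not> P i x}) - int (card {x\<in>?G. \<forall>i\<in>K. \<not> P i x})"
    unfolding e using sub insert.prems by (simp add: card_Diff_subset of_nat_diff card_mono finite_subset)
  also have "\<dots> = (\<Sum>I\<in>Pow K. (-1) ^ card I * int (card {x\<in>F. \<forall>i\<in>I. P i x}))
      - (\<Sum>I\<in>Pow K. (-1) ^ card I * int (card {x\<in>?G. \<forall>i\<in>I. P i x}))"
    using insert.IH[of F] insert.IH[of ?G] insert.prems by simp
  also have "(\<Sum>I\<in>Pow K. (-1) ^ card I * int (card {x\<in>?G. \<forall>i\<in>I. P i x}))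
     = - (\<Sum>I\<in>insert a ` Pow K. (-1) ^ card I * int (card {x\<in>F. \<forall>i\<in>I. P i x}))"
  proof -
    have inj: "inj_on (insert a) (Pow K)" using insert(2) by (auto simp: inj_on_def)
    have "(\<Sum>I\<in>insert a ` Pow K. (-1) ^ card I * int (card {x\<in>F. \<forall>i\<in>I. P i x}))
        = (\<Sum>I\<in>Pow K. (-1) ^ card (insert a I) * int (card {x\<in>F. \<forall>i\<in>insert a I. P i x}))"
      by (rule sum.reindex[OF inj, unfolded comp_def])
    also have "\<dots> = (\<Sum>I\<in>Pow K. - ((-1) ^ card I * int (card {x\<in>?G. \<forall>i\<in>I. P i x})))"
    proof (rule sum.cong)
      fix I assume "I \<in> Pow K"
      then have "a \<notin> I" "finite I" using insert(1,2) finite_subset by auto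
      moreover have "{x\<in>F. \<forall>i\<in>insert a I. P i x} = {x\<in>?G. \<forall>i\<in>I. P i x}" by auto
      ultimately show "(-1) ^ card (insert a I) * int (card {x\<in>F. \<forall>i\<in>insert a I. P i x}) =
         - ((-1) ^ card I * int (card {x\<in>?G. \<forall>i\<in>I. P i x}))" by simp
    qed simp
    finally show ?thesis by (simp add: sum_negf)
  qed
  also have "(\<Sum>I\<in>Pow K. (-1) ^ card I * int (card {x\<in>F. \<forall>i\<in>I. P i x}))
      - - (\<Sum>I\<in>insert a ` Pow K. (-1) ^ card I * int (card {x\<in>F. \<forall>i\<in>I. P i x}))
      = (\<Sum>I\<in>Pow (insert a K). (-1) ^ card I * int (card {x\<in>F. \<forall>i\<in>I. P i x}))"
    unfolding Pow_insert using insert(1,2)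
    by (subst sum.union_disjoint) auto
  finally show ?case .
qed


definition surjs :: "'a set \<Rightarrow> 'b set \<Rightarrow> ('a \<Rightarrow> 'b) set" where
  "surjs X Y = {g \<in> X \<rightarrow>\<^sub>E Y. g ` X = Y}"

lemma surjs_finite: "finite X \<Longrightarrow> finite Y \<Longrightarrow> finite (surjs X Y)"
  unfolding surjs_def by (rule finite_subset[of _ "X \<rightarrow>\<^sub>E Y"]) (auto intro: finite_PiE)

lemma card_surjs:
  assumes "finite X" "finite Y"
  shows "card (surjs X Y) = fact (card Y) * Stirling (card X) (card Y)"
  using assms
proof (induction X arbitrary: Y rule: finite_induct)
  case empty
  show ?case
  proof (cases "Y = {}")
    case True
    have "surjs {} Y = {\<lambda>_. undefined}" unfolding surjs_def using True by auto
    then have "card (surjs {} Y) = 1" by (metis card_1_singleton_iff One_nat_def)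
    then show ?thesis using True by simp
  next
    case False
    have "surjs {} Y = {}" unfolding surjs_def using False by auto
    then have c: "card (surjs {} Y) = 0" by (metis card.empty)
    have "card Y \<noteq> 0" using False empty by simp
    then show ?thesis unfolding c by (cases "card Y") auto
  qed
next
  case (insert x X)
  let ?B = "\<lambda>y. surjs X Y \<union> surjs X (Y - {y})"
  have bij: "bij_betw (\<lambda>g. (g x, g(x := undefined))) (surjs (insert x X) Y) (Sigma Y ?B)"
  proof (rule bij_betw_byWitness[where f' = "\<lambda>(y, h). h(x := y)"])
    show "\<forall>a\<in>surjs (insert x X) Y. (case (a x, a(x := undefined)) of (y, h) \<Rightarrow> h(x := y)) = a"
      by auto
    show "\<forall>a'\<in>Sigma Y ?B. (\<lambda>g. (g x, g(x := undefined))) (case a' of (y, h) \<Rightarrow> h(x := y)) = a'"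
      using insert(2) by (auto simp: surjs_def PiE_def extensional_def)
    show "(\<lambda>g. (g x, g(x := undefined))) ` surjs (insert x X) Y \<subseteq> Sigma Y ?B"
    proof clarify
      fix g assume g: "g \<in> surjs (insert x X) Y"
      then have gx: "g x \<in> Y" and gi: "g ` insert x X = Y" and gp: "g \<in> insert x X \<rightarrow>\<^sub>E Y"
        by (auto simp: surjs_def)
      have im: "g(x := undefined) ` X = g ` X" using insert(2) by auto
      have "g ` X = Y \<or> g ` X = Y - {g x}" using gi by blast
      moreover have "g(x := undefined) \<in> X \<rightarrow>\<^sub>E Y" using gp insert(2) by (auto simp: PiE_def extensional_def)
      moreover have "g(x := undefined) \<in> X \<rightarrow>\<^sub>E Y - {g x}" if "g ` X = Y - {g x}"
        using gp insert(2) that by (auto simp: PiE_def extensional_def)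
      ultimately show "g x \<in> Y \<and> g(x := undefined) \<in> ?B (g x)"
        using gx im by (auto simp: surjs_def)
    qed
    show "(\<lambda>(y, h). h(x := y)) ` Sigma Y ?B \<subseteq> surjs (insert x X) Y"
    proof clarify
      fix y h assume y: "y \<in> Y" and h: "h \<in> ?B y"
      have im: "h(x := y) ` insert x X = insert y (h ` X)" using insert(2) by auto
      from h have "h ` X = Y \<or> h ` X = Y - {y}" "h \<in> X \<rightarrow>\<^sub>E Y" by (auto simp: surjs_def)
      then show "h(x := y) \<in> surjs (insert x X) Y"
        unfolding surjs_def using y im by (auto simp: PiE_def extensional_def)
    qed
  qed
  have "card (surjs (insert x X) Y) = card (Sigma Y ?B)" using bij_betw_same_card[OF bij] .
  also have "\<dots> = (\<Sum>y\<in>Y. card (?B y))" using insert.prems insert.hyps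
    by (intro card_SigmaI) (auto intro: surjs_finite)
  also have "\<dots> = (\<Sum>y\<in>Y. card (surjs X Y) + card (surjs X (Y - {y})))"
  proof (rule sum.cong)
    fix y assume "y \<in> Y"
    then have "surjs X Y \<inter> surjs X (Y - {y}) = {}" by (auto simp: surjs_def)
    then show "card (?B y) = card (surjs X Y) + card (surjs X (Y - {y}))"
      using insert.prems insert.hyps by (intro card_Un_disjoint) (auto intro: surjs_finite)
  qed simp
  also have "\<dots> = (\<Sum>y\<in>Y. fact (card Y) * Stirling (card X) (card Y) + fact (card Y - 1) * Stirling (card X) (card Y - 1))"
    using insert.IH insert.prems by (intro sum.cong) auto
  also have "\<dots> = card Y * (fact (card Y) * Stirling (card X) (card Y) + fact (card Y - 1) * Stirling (card X) (card Y - 1))"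
    by simp
  also have "\<dots> = fact (card Y) * Stirling (card (insert x X)) (card Y)"
  proof (cases "card Y")
    case 0 then show ?thesis using insert.hyps by simp
  next
    case (Suc k)
    then show ?thesis using insert.hyps by (simp add: algebra_simps)
  qed
  finally show ?case .
qed


lemma card_constrained:
  assumes "finite I" "finite D" "finite N"
    "\<forall>i\<in>I. X i \<subseteq> D" "\<forall>i\<in>I. \<forall>j\<in>I. i \<noteq> j \<longrightarrow> X i \<inter> X j = {}" "\<forall>i\<in>I. Y i \<subseteq> N"
  shows "card {f \<in> D \<rightarrow>\<^sub>E N. \<forall>i\<in>I. f ` X i = Y i}
     = card N ^ card (D - (\<Union>i\<in>I. X i)) * (\<Prod>i\<in>I. card (surjs (X i) (Y i)))"
  using assms
proof (induction I arbitrary: D rule: finite_induct)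
  case empty
  then show ?case by (simp add: card_PiE)
next
  case (insert a I)
  define D' where "D' = D - X a"
  have XI: "\<forall>i\<in>I. X i \<subseteq> D'"
  proof
    fix i assume i: "i \<in> I"
    then have "i \<noteq> a" using insert.hyps by auto
    then have "X i \<inter> X a = {}" "X i \<subseteq> D" using insert.prems(3,4) i by auto
    then show "X i \<subseteq> D'" unfolding D'_def by blast
  qed
  have IH: "card {f \<in> D' \<rightarrow>\<^sub>E N. \<forall>i\<in>I. f ` X i = Y i}
     = card N ^ card (D' - (\<Union>i\<in>I. X i)) * (\<Prod>i\<in>I. card (surjs (X i) (Y i)))"
    using insert.prems XI by (intro insert.IH) (auto simp: D'_def)
  let ?S = "{f \<in> D \<rightarrow>\<^sub>E N. \<forall>i\<in>insert a I. f ` X i = Y i}"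
  let ?T = "{f \<in> D' \<rightarrow>\<^sub>E N. \<forall>i\<in>I. f ` X i = Y i}"
  have Xa: "X a \<subseteq> D" "Y a \<subseteq> N" using insert.prems by auto
  have bij: "bij_betw (\<lambda>f. (restrict f (X a), restrict f D')) ?S (surjs (X a) (Y a) \<times> ?T)"
  proof (rule bij_betw_byWitness[where f' = "\<lambda>(g, h) z. if z \<in> X a then g z else h z"])
    show "\<forall>f\<in>?S. (case (restrict f (X a), restrict f D') of (g, h) \<Rightarrow> \<lambda>z. if z \<in> X a then g z else h z) = f"
      using Xa by (auto simp: D'_def PiE_def extensional_def fun_eq_iff)
    show "\<forall>p\<in>surjs (X a) (Y a) \<times> ?T. (\<lambda>f. (restrict f (X a), restrict f D')) ((case p of (g, h) \<Rightarrow> \<lambda>z. if z \<in> X a then g z else h z)) = p"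
      by (auto simp: D'_def PiE_def extensional_def fun_eq_iff surjs_def)
    show "(\<lambda>f. (restrict f (X a), restrict f D')) ` ?S \<subseteq> surjs (X a) (Y a) \<times> ?T"
    proof clarify
      fix f assume f: "f \<in> D \<rightarrow>\<^sub>E N" "\<forall>i\<in>insert a I. f ` X i = Y i"
      have "restrict f (X a) \<in> surjs (X a) (Y a)" using f Xa by (auto simp: surjs_def)
      moreover have "restrict f D' ` X i = Y i" if "i \<in> I" for i
      proof -
        have "restrict f D' ` X i = f ` X i" using XI that by (intro image_cong) auto
        then show ?thesis using f(2) that by simp
      qed
      ultimately show "restrict f (X a) \<in> surjs (X a) (Y a) \<and> restrict f D' \<in> ?T"
        using f(1) by (auto simp: D'_def)
    qed
    show "(\<lambda>(g, h) z. if z \<in> X a then g z else h z) ` (surjs (X a) (Y a) \<times> ?T) \<subseteq> ?S"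
    proof (rule subsetI)
      fix p assume "p \<in> (\<lambda>(g, h) z. if z \<in> X a then g z else h z) ` (surjs (X a) (Y a) \<times> ?T)"
      then obtain g h where pe: "p = (\<lambda>z. if z \<in> X a then g z else h z)" and g: "g \<in> surjs (X a) (Y a)"
        and h: "h \<in> D' \<rightarrow>\<^sub>E N" "\<forall>i\<in>I. h ` X i = Y i" by auto
      let ?f = "\<lambda>z. if z \<in> X a then g z else h z"
      have "?f \<in> D \<rightarrow>\<^sub>E N" using g h(1) Xa by (auto simp: surjs_def PiE_def extensional_def D'_def Pi_def)
      moreover have "?f ` X a = Y a" using g by (auto simp: surjs_def)
      moreover have "?f ` X i = Y i" if "i \<in> I" for i
      proof -
        have "?f ` X i = h ` X i" using XI that unfolding D'_def by (intro image_cong) auto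
        then show ?thesis using h(2) that by simp
      qed
      ultimately show "p \<in> ?S" unfolding pe by auto
    qed
  qed
  have c: "card ?S = card (surjs (X a) (Y a)) * card ?T"
    using bij_betw_same_card[OF bij] by (simp add: card_cartesian_product)
  have eqD: "D' - (\<Union>i\<in>I. X i) = D - (\<Union>i\<in>insert a I. X i)" unfolding D'_def by auto
  have p: "(\<Prod>i\<in>insert a I. card (surjs (X i) (Y i))) = card (surjs (X a) (Y a)) * (\<Prod>i\<in>I. card (surjs (X i) (Y i)))"
    using insert.hyps by simp
  show ?case unfolding c IH eqD p by (simp only: mult.left_commute)
qed


theorem theorem2:
  fixes m n k :: nat
    and X Y :: "nat \<Rightarrow> nat set"
    and lab :: "nat \<Rightarrow> (nat \<Rightarrow> nat)"
    and b :: "nat \<Rightarrow> nat \<Rightarrow> nat"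
  assumes "m > 0" "n > 0" "k > 0"
    and X_sub: "\<forall>i\<in>{1..k}. X i \<subseteq> {1..m}"
    and X_disj: "\<forall>i\<in>{1..k}. \<forall>j\<in>{1..k}. i \<noteq> j \<longrightarrow> X i \<inter> X j = {}"
    and Y_sub: "\<forall>i\<in>{1..k}. Y i \<subseteq> {1..n}"
    and lab: "bij_betw lab {1..n ^ m} (funs m n)"
    and b_def: "\<forall>i\<in>{1..k}. \<forall>j\<in>{1..n ^ m}.
                  b i j = (if lab j ` X i = Y i then 1 else 0)"
  shows "int (card {j \<in> {1..n ^ m}. \<forall>i\<in>{1..k}. b i j = 0}) =
    (\<Sum>I\<in>Pow {1..k}. (-1) ^ card I *
       int (n ^ card ({1..m} - (\<Union>i\<in>I. X i)) *
            (\<Prod>i\<in>I. fact (card (Y i)) * Stirling (card (X i)) (card (Y i)))))"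
proof -
  let ?F = "funs m n"
  have finF: "finite ?F" unfolding funs_def by (intro finite_PiE) auto
  let ?A = "{j \<in> {1..n ^ m}. \<forall>i\<in>{1..k}. b i j = 0}"
  have bd: "\<And>i j. i \<in> {1..k} \<Longrightarrow> j \<in> {1..n ^ m} \<Longrightarrow> b i j = (if lab j ` X i = Y i then 1 else 0)"
    using b_def by blast
  have A: "?A = {j \<in> {1..n ^ m}. \<forall>i\<in>{1..k}. \<not> lab j ` X i = Y i}"
    by (intro Collect_cong conj_cong refl ball_cong) (simp add: bd)
  have img: "lab ` ?A = {f \<in> ?F. \<forall>i\<in>{1..k}. \<not> f ` X i = Y i}"
  proof -
    have g: "lab ` {j \<in> {1..n ^ m}. \<forall>i\<in>{1..k}. \<not> lab j ` X i = Y i} = {f \<in> lab ` {1..n ^ m}. \<forall>i\<in>{1..k}. \<not> f ` X i = Y i}" by blast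
    show ?thesis unfolding A g bij_betw_imp_surj_on[OF lab] ..
  qed
  have "bij_betw lab ?A (lab ` ?A)"
    by (rule bij_betw_subset[OF lab]) auto
  then have cA: "card ?A = card {f \<in> ?F. \<forall>i\<in>{1..k}. \<not> f ` X i = Y i}"
    unfolding img[symmetric] by (rule bij_betw_same_card)
  have "int (card ?A) = (\<Sum>I\<in>Pow {1..k}. (-1) ^ card I * int (card {f \<in> ?F. \<forall>i\<in>I. f ` X i = Y i}))"
    unfolding cA by (rule IE) (auto simp: finF)
  also have "\<dots> = (\<Sum>I\<in>Pow {1..k}. (-1) ^ card I *
       int (n ^ card ({1..m} - (\<Union>i\<in>I. X i)) *
            (\<Prod>i\<in>I. fact (card (Y i)) * Stirling (card (X i)) (card (Y i)))))"
  proof (rule sum.cong)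
    fix I assume I: "I \<in> Pow {1..k}"
    then have fI: "finite I" by (auto intro: finite_subset)
    have "card {f \<in> ?F. \<forall>i\<in>I. f ` X i = Y i} =
      card {1..n} ^ card ({1..m} - (\<Union>i\<in>I. X i)) * (\<Prod>i\<in>I. card (surjs (X i) (Y i)))"
    proof -
      have I': "I \<subseteq> {1..k}" using I by simp
      have dI: "\<forall>i\<in>I. \<forall>j\<in>I. i \<noteq> j \<longrightarrow> X i \<inter> X j = {}" using I' X_disj by (meson subsetD)
      have sI: "\<forall>i\<in>I. X i \<subseteq> {1..m}" "\<forall>i\<in>I. Y i \<subseteq> {1..n}" using I' X_sub Y_sub by (meson subsetD)+
      show ?thesis unfolding funs_def by (rule card_constrained[OF fI _ _ sI(1) dI sI(2)]) auto
    qed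
    also have "(\<Prod>i\<in>I. card (surjs (X i) (Y i))) = (\<Prod>i\<in>I. fact (card (Y i)) * Stirling (card (X i)) (card (Y i)))"
    proof (rule prod.cong)
      fix i assume "i \<in> I"
      then have "X i \<subseteq> {1..m}" "Y i \<subseteq> {1..n}" using I X_sub Y_sub by auto
      then show "card (surjs (X i) (Y i)) = fact (card (Y i)) * Stirling (card (X i)) (card (Y i))"
        by (intro card_surjs) (auto intro: finite_subset)
    qed simp
    finally show "(-1) ^ card I * int (card {f \<in> ?F. \<forall>i\<in>I. f ` X i = Y i}) =
      (-1) ^ card I * int (n ^ card ({1..m} - (\<Union>i\<in>I. X i)) *
            (\<Prod>i\<in>I. fact (card (Y i)) * Stirling (card (X i)) (card (Y i))))" by simp
  qed simp
  finally show ?thesis .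
qed

end
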